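(* For each integer $d\ge 1$, the power series expansion at $x=0$ of the rational function $$\Delta_d(x)=\frac{1}{(1-x)^{d+1}-x^{d+1}}-\frac{1}{1-2x}$$ has only nonnegative coefficients. *)

theory Defs
  imports "HOL-Computational_Algebra.Formal_Power_Series"
begin

text \<open>Both denominators have constant term 1 (for d \<ge> 1), so the fps inverses
  are the genuine power series expansions of the reciprocals.\<close>
definition Delta_fps :: "nat \<Rightarrow> real fps" where
  "Delta_fps d = inverse ((1 - fps_X) ^ (d + 1) - fps_X ^ (d + 1))
                 - inverse (1 - 2 * fps_X)"

end

theory Submission
  imports Defs
begin

notation fps_nth (infixl \<open>$\<close> 75)

lemma D0: "((1 - fps_X) ^ (d + 1) - fps_X ^ (d + 1) :: real fps) $ 0 = 1"
  by (simp add: fps_nth_power_0)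

lemma Gnonneg:
  fixes A :: "real fps" and d :: nat
  defines "G \<equiv> \<lambda>r. fps_X ^ r * (1 - fps_X) ^ (d - r) * A"
  assumes DA: "((1 - fps_X) ^ (d + 1) - fps_X ^ (d + 1)) * A = 1"
  shows "\<forall>r\<le>d. G r $ n \<ge> 0"
proof (induction n)
  case 0
  have "A $ 0 = 1" using arg_cong[OF DA, of "\<lambda>f. f $ 0"] D0[of d] by simp
  then show ?case by (auto simp: G_def fps_nth_power_0)
next
  case (Suc n)
  have rec1: "G r $ Suc n = G r $ n + G (r - 1) $ n" if "1 \<le> r" "r \<le> d" for r
  proof -
    have "(1 - fps_X) * G r = fps_X * G (r - 1)"
    proof -
      have "d - (r - 1) = Suc (d - r)" using that by simp
      moreover have "r = Suc (r - 1)" using that by simp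
      ultimately show ?thesis unfolding G_def
        by (metis (no_types, lifting) mult.assoc mult.left_commute power_Suc)
    qed
    from arg_cong[OF this, of "\<lambda>f. f $ Suc n"] show ?thesis
      by (simp add: algebra_simps)
  qed
  have rec0: "G 0 $ Suc n = G 0 $ n + G d $ n"
  proof -
    have "(1 - fps_X) * G 0 = (1 - fps_X) ^ (d + 1) * A" unfolding G_def by simp
    also have "\<dots> = 1 + fps_X ^ (d+1) * A" using DA by (simp add: algebra_simps)
    also have "\<dots> = 1 + fps_X * G d" unfolding G_def by (simp add: mult.assoc)
    finally have "(1 - fps_X) * G 0 = 1 + fps_X * G d" .
    from arg_cong[OF this, of "\<lambda>f. f $ Suc n"] show ?thesis
      by (simp add: algebra_simps)
  qed
  show ?case
  proof (intro allI impI)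
    fix r assume "r \<le> d"
    show "0 \<le> G r $ Suc n"
    proof (cases "r = 0")
      case True
      then show ?thesis using rec0 Suc.IH by fastforce
    next
      case False
      then show ?thesis using rec1[of r] Suc.IH \<open>r \<le> d\<close> by fastforce
    qed
  qed
qed

theorem theorem3p3:
  fixes d :: nat
  assumes "d \<ge> 1"
  shows "\<forall>n. fps_nth (Delta_fps d) n \<ge> 0"
proof
  fix n
  define D :: "real fps" where "D = (1 - fps_X) ^ (d + 1) - fps_X ^ (d + 1)"
  define A where "A = inverse D"
  define G where "G = (\<lambda>r. fps_X ^ r * (1 - fps_X) ^ (d - r) * A)"
  define Q :: "real fps" where "Q = (\<Sum>i<d+1. fps_X ^ (d + 1 - Suc i) * (1 - fps_X) ^ i)"
  have DA: "D * A = 1" unfolding A_def D_def by (rule inverse_mult_eq_1') (simp add: fps_nth_power_0)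
  have DQ: "D = (1 - 2 * fps_X) * Q"
    unfolding D_def Q_def using power_diff_sumr2[of "1 - fps_X :: real fps" "d+1" "fps_X"]
    by (simp add: algebra_simps)
  have inv2: "inverse (1 - 2 * fps_X :: real fps) = Q * A"
    by (rule fps_inverse_unique) (use DA DQ in \<open>simp add: mult.assoc\<close>)
  have QG: "Q * A = (\<Sum>i\<le>d. G i)"
  proof -
    have "Q * A = (\<Sum>i<d+1. fps_X ^ (d - i) * (1 - fps_X) ^ i * A)"
      unfolding Q_def sum_distrib_right by (intro sum.cong) auto
    also have "\<dots> = (\<Sum>i\<le>d. G (d - i))"
      unfolding G_def
      by (intro sum.cong) auto
    also have "\<dots> = (\<Sum>i\<le>d. G i)"
      by (rule sum.reindex_bij_witness[of _ "\<lambda>i. d - i" "\<lambda>i. d - i"]) auto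
    finally show ?thesis .
  qed
  have AG: "A = (\<Sum>i\<le>d. of_nat (d choose i) * G i)"
  proof -
    have "A = (fps_X + (1 - fps_X)) ^ d * A" by simp
    also have "\<dots> = (\<Sum>i\<le>d. of_nat (d choose i) * G i)"
      unfolding binomial_ring G_def by (simp add: sum_distrib_right mult.assoc)
    finally show ?thesis .
  qed
  have Delta: "Delta_fps d = (\<Sum>i\<le>d. (of_nat (d choose i) - 1) * G i)"
    unfolding Delta_fps_def D_def[symmetric] A_def[symmetric] inv2 QG
    by (subst AG) (simp add: algebra_simps sum_subtractf)
  have Gn: "\<forall>r\<le>d. G r $ n \<ge> 0" unfolding G_def
    by (rule Gnonneg) (use DA D_def in simp)
  have "Delta_fps d $ n = (\<Sum>i\<le>d. (real (d choose i) - 1) * G i $ n)"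
    unfolding Delta fps_sum_nth
  proof (intro sum.cong refl)
    fix i
    have "(of_nat (d choose i) - 1 :: real fps) = fps_const (real (d choose i) - 1)"
      by (simp flip: fps_of_nat fps_const_sub fps_const_1_eq_1)
    then show "((of_nat (d choose i) - 1) * G i) $ n = (real (d choose i) - 1) * G i $ n"
      by simp
  qed
  also have "\<dots> \<ge> 0"
  proof (intro sum_nonneg mult_nonneg_nonneg)
    fix i assume "i \<in> {..d}"
    then have "d choose i \<ge> 1" by (simp add: Suc_leI)
    then show "0 \<le> real (d choose i) - 1" by simp
    show "0 \<le> G i $ n" using Gn \<open>i \<in> {..d}\<close> by simp
  qed
  finally show "Delta_fps d $ n \<ge> 0" .
qed

end
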